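(* Assume the setting and hypotheses (a)–(c) below. Suppose $\mathbf{P}_0(\bar x_0)$ is feasible, and define recursively, for all $k\ge0$, $\bar{\mathbf u}^*_k=(\bar u^*_{0|k},\dots,\bar u^*_{N-1|k})$ an optimal solution of $\mathbf{P}_k(\bar x_k)$ and $\bar x_{k+1}=A\bar x_k+B\bar u^*_{0|k}$. Let $\ell_k:=\bar x_k^TQ\bar x_k+(\bar u^*_{0|k})^TR\,\bar u^*_{0|k}+\mathrm{trace}[(Q+K^TRK)\Sigma_k]$ (which equals $\mathbb{E}[x_k^TQx_k+u_k^TRu_k]$ when $x_k=\bar x_k+\Delta x_k$ with $\mathbb{E}[\Delta x_k]=0$, $\mathbb{E}[\Delta x_k\Delta x_k^T]=\Sigma_k$ and $u_k=K\Delta x_k+\bar u^*_{0|k}$). Then $$\limsup_{M\to\infty}\frac{1}{M}\sum_{k=0}^{M-1}\ell_k\le\mathrm{trace}(SW).$$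
   Context: System data: $A\in\mathbb{R}^{n_x\times n_x}$, $B\in\mathbb{R}^{n_x\times n_u}$, feedback gain $K\in\mathbb{R}^{n_u\times n_x}$, $A_K:=A+BK$, noise covariance $W\succeq0$, $Q,R$ positive definite, horizon $N\ge 1$, $S$ the solution of $A_K^TSA_K-S=-Q-K^TRK$. $\bar\Sigma\succeq0$ solves $\bar\Sigma=A_K\bar\Sigma A_K^T+W$. Covariance sequence: $\Sigma_0\succeq 0$ with $\Sigma_0\preceq\bar\Sigma$ (e.g. $\Sigma_0=0$), $\Sigma_{j+1}=A_K\Sigma_jA_K^T+W$. Fix $a\in\mathbb{R}^{n_x}$, $c\in\mathbb{R}^{n_u}$, $b,d>0$, $p_x,p_u\in(0,1)$. For $\Sigma\succeq 0$, $\mathcal{X}(\Sigma)=\{\bar x:\ \exists\, y\ge 0,\ \lambda\in[0,b],\ y^2+a^T\Sigma a\le p_x(b-\lambda)^2,\ |a^T\bar x|\le y+\lambda\}$ and $\mathcal{U}(\Sigma)=\{\bar u:\ \exists\, y\ge 0,\ \lambda\in[0,d],\ y^2+c^TK\Sigma K^Tc\le p_u(d-\lambda)^2,\ |c^T\bar u|\le y+\lambda\}$; terminal set $\bar{\mathcal{X}}_f:=\mathcal{X}(\bar\Sigma)$. Problem $\mathbf{P}_k(\bar x)$: minimize over $\bar{\mathbf u}=(\bar u_0,\dots,\bar u_{N-1})$ the cost $J_k(\bar x,\bar{\mathbf u})=\sum_{l=0}^{N-1}(\bar x_l^TQ\bar x_l+\bar u_l^TR\bar u_l)+\bar x_N^TS\bar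 x_N+\sum_{l=0}^{N-1}\mathrm{trace}[(Q+K^TRK)\Sigma_{k+l}]+\mathrm{trace}(S\Sigma_{k+N})$ subject to $\bar x_0=\bar x$, $\bar x_{l+1}=A\bar x_l+B\bar u_l$, $\bar x_l\in\mathcal{X}(\Sigma_{k+l})$ and $\bar u_l\in\mathcal{U}(\Sigma_{k+l})$ for $l=0,\dots,N-1$, and $\bar x_N\in\bar{\mathcal{X}}_f$. Hypotheses: (a) $Kx\in\mathcal{U}(\Sigma_{k+N})$ for all $x\in\bar{\mathcal{X}}_f$ and all $k\ge0$; (b) all eigenvalues of $A_K$ have modulus $<1$; (c) $A_Kx\in\bar{\mathcal{X}}_f$ for all $x\in\bar{\mathcal{X}}_f$. *)

theory Defs
  imports "HOL-Analysis.Analysis"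
begin

definition psd :: "real^'n^'n \<Rightarrow> bool" where
  "psd M \<longleftrightarrow> transpose M = M \<and> (\<forall>x. 0 \<le> x \<bullet> (M *v x))"

definition pd :: "real^'n^'n \<Rightarrow> bool" where
  "pd M \<longleftrightarrow> transpose M = M \<and> (\<forall>x. x \<noteq> 0 \<longrightarrow> 0 < x \<bullet> (M *v x))"

definition loewner_le :: "real^'n^'n \<Rightarrow> real^'n^'n \<Rightarrow> bool" where
  "loewner_le M N \<longleftrightarrow> psd (N - M)"

definition is_eigenvalue :: "real^'n^'n \<Rightarrow> complex \<Rightarrow> bool" where
  "is_eigenvalue M \<mu> \<longleftrightarrow> (\<exists>v::complex^'n. v \<noteq> 0 \<and> map_matrix complex_of_real M *v v = \<mu> *s v)"

definition Xset :: "real^'n \<Rightarrow> real \<Rightarrow> real \<Rightarrow> real^'n^'n \<Rightarrow> (real^'n) set" where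
  "Xset a b px Sig = {xb. \<exists>y lam. 0 \<le> y \<and> 0 \<le> lam \<and> lam \<le> b \<and>
      y\<^sup>2 + a \<bullet> (Sig *v a) \<le> px * (b - lam)\<^sup>2 \<and> \<bar>a \<bullet> xb\<bar> \<le> y + lam}"

definition Uset :: "real^'n^'m \<Rightarrow> real^'m \<Rightarrow> real \<Rightarrow> real \<Rightarrow> real^'n^'n \<Rightarrow> (real^'m) set" where
  "Uset K c d pu Sig = {ub. \<exists>y lam. 0 \<le> y \<and> 0 \<le> lam \<and> lam \<le> d \<and>
      y\<^sup>2 + c \<bullet> ((K ** Sig ** transpose K) *v c) \<le> pu * (d - lam)\<^sup>2 \<and> \<bar>c \<bullet> ub\<bar> \<le> y + lam}"

fun covseq :: "real^'n^'n \<Rightarrow> real^'n^'n \<Rightarrow> real^'n^'n \<Rightarrow> nat \<Rightarrow> real^'n^'n" where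
  "covseq AK W S0 0 = S0"
| "covseq AK W S0 (Suc j) = AK ** covseq AK W S0 j ** transpose AK + W"

fun xpred :: "real^'n^'n \<Rightarrow> real^'m^'n \<Rightarrow> real^'n \<Rightarrow> (nat \<Rightarrow> real^'m) \<Rightarrow> nat \<Rightarrow> real^'n" where
  "xpred A B x u 0 = x"
| "xpred A B x u (Suc l) = A *v xpred A B x u l + B *v u l"

(* feasibility for P_k(x); Xs, Us are the constraint-set maps, Xf the terminal set,
   Sg the covariance sequence. Only u 0 .. u (N-1) matter. *)
definition feasibleP ::
  "real^'n^'n \<Rightarrow> real^'m^'n \<Rightarrow> (real^'n^'n \<Rightarrow> (real^'n) set) \<Rightarrow> (real^'n^'n \<Rightarrow> (real^'m) set)
   \<Rightarrow> (real^'n) set \<Rightarrow> nat \<Rightarrow> (nat \<Rightarrow> real^'n^'n) \<Rightarrow> nat \<Rightarrow> real^'n \<Rightarrow> (nat \<Rightarrow> real^'m) \<Rightarrow> bool" where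
  "feasibleP A B Xs Us Xf N Sg k x u \<longleftrightarrow>
     (\<forall>l<N. xpred A B x u l \<in> Xs (Sg (k + l)) \<and> u l \<in> Us (Sg (k + l))) \<and> xpred A B x u N \<in> Xf"

definition costJ ::
  "real^'n^'n \<Rightarrow> real^'m^'n \<Rightarrow> real^'n^'n \<Rightarrow> real^'m^'m \<Rightarrow> real^'n^'m \<Rightarrow> real^'n^'n
   \<Rightarrow> nat \<Rightarrow> (nat \<Rightarrow> real^'n^'n) \<Rightarrow> nat \<Rightarrow> real^'n \<Rightarrow> (nat \<Rightarrow> real^'m) \<Rightarrow> real" where
  "costJ A B Q R K S N Sg k x u =
     (\<Sum>l<N. xpred A B x u l \<bullet> (Q *v xpred A B x u l) + u l \<bullet> (R *v u l))
     + xpred A B x u N \<bullet> (S *v xpred A B x u N)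
     + (\<Sum>l<N. trace ((Q + transpose K ** R ** K) ** Sg (k + l)))
     + trace (S ** Sg (k + N))"

definition optimalP ::
  "real^'n^'n \<Rightarrow> real^'m^'n \<Rightarrow> real^'n^'n \<Rightarrow> real^'m^'m \<Rightarrow> real^'n^'m \<Rightarrow> real^'n^'n
   \<Rightarrow> (real^'n^'n \<Rightarrow> (real^'n) set) \<Rightarrow> (real^'n^'n \<Rightarrow> (real^'m) set) \<Rightarrow> (real^'n) set
   \<Rightarrow> nat \<Rightarrow> (nat \<Rightarrow> real^'n^'n) \<Rightarrow> nat \<Rightarrow> real^'n \<Rightarrow> (nat \<Rightarrow> real^'m) \<Rightarrow> bool" where
  "optimalP A B Q R K S Xs Us Xf N Sg k x u \<longleftrightarrow>
     feasibleP A B Xs Us Xf N Sg k x u \<and>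
     (\<forall>v. feasibleP A B Xs Us Xf N Sg k x v \<longrightarrow> costJ A B Q R K S N Sg k x u \<le> costJ A B Q R K S N Sg k x v)"

end

theory Submission
  imports Defs "Jordan_Normal_Form.Spectral_Radius"
begin

no_notation Matrix.scalar_prod (infix "\<bullet>" 70)


definition ix :: "'n::finite \<Rightarrow> nat" where
  "ix = (SOME f. bij_betw f (UNIV::'n set) {0..<CARD('n)})"

lemma ix_bij: "bij_betw (ix::'n::finite\<Rightarrow>nat) UNIV {0..<CARD('n)}"
proof -
  obtain h where "bij_betw h (UNIV::'n set) {0..<card (UNIV::'n set)}"
    using ex_bij_betw_finite_nat[of "UNIV::'n set"] by auto
  thus ?thesis unfolding ix_def
    by (intro someI_ex[of "\<lambda>f. bij_betw f (UNIV::'n set) {0..<CARD('n)}"]) blast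
qed

definition xi :: "nat \<Rightarrow> 'n::finite" where "xi = inv_into UNIV ix"

lemma xi_bij: "bij_betw (xi::nat\<Rightarrow>'n::finite) {0..<CARD('n)} UNIV"
  unfolding xi_def using ix_bij bij_betw_inv_into by blast

lemma ix_lt: "ix (k::'n::finite) < CARD('n)"
  using ix_bij[where 'n='n] by (auto simp: bij_betw_def)

lemma xi_ix[simp]: "xi (ix (k::'n::finite)) = k"
  unfolding xi_def using ix_bij[where 'n='n] by (simp add: bij_betw_def)

lemma ix_xi[simp]: "i < CARD('n::finite) \<Longrightarrow> ix (xi i :: 'n) = i"
  unfolding xi_def using ix_bij[where 'n='n] by (simp add: bij_betw_inv_into_right)

definition cmat :: "real^'n^'n \<Rightarrow> complex mat" where
  "cmat M = Matrix.mat CARD('n::finite) CARD('n) (\<lambda>(i,j). complex_of_real (M $ xi i $ xi j))"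

definition cvec :: "real^'n \<Rightarrow> complex Matrix.vec" where
  "cvec x = Matrix.vec CARD('n::finite) (\<lambda>i. complex_of_real (x $ xi i))"

lemma cmat_carrier: "cmat (M::real^'n::finite^'n) \<in> carrier_mat CARD('n) CARD('n)"
  unfolding cmat_def by simp

lemma dim_cmat[simp]: "dim_row (cmat (M::real^'n::finite^'n)) = CARD('n)" "dim_col (cmat M) = CARD('n)"
  unfolding cmat_def by simp_all

lemma cvec_carrier: "cvec (x::real^'n::finite) \<in> carrier_vec CARD('n)"
  unfolding cvec_def by simp

lemma sum_xi: "(\<Sum>j<CARD('n::finite). g (xi j :: 'n)) = (\<Sum>k\<in>UNIV. g k)"
proof -
  have "(\<Sum>j\<in>{0..<CARD('n)}. g (xi j :: 'n)) = (\<Sum>k\<in>UNIV. g k)"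
    by (rule sum.reindex_bij_betw[OF xi_bij])
  thus ?thesis by (simp add: atLeast0LessThan)
qed

lemma cmat_mult: "cmat M *\<^sub>v cvec x = cvec (M *v (x::real^'n::finite))"
proof (rule eq_vecI)
  show "dim_vec (cmat M *\<^sub>v cvec x) = dim_vec (cvec (M *v x))"
    by (simp add: cmat_def cvec_def)
  fix i assume "i < dim_vec (cvec (M *v x))"
  hence i: "i < CARD('n)" by (simp add: cvec_def)
  have "(cmat M *\<^sub>v cvec x) $ i = (\<Sum>j<CARD('n). complex_of_real (M $ xi i $ xi j * x $ xi j))"
    using i by (simp add: cmat_def cvec_def scalar_prod_def atLeast0LessThan)
  also have "\<dots> = (\<Sum>k\<in>UNIV. complex_of_real (M $ xi i $ k * x $ k))"
    by (rule sum_xi)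
  also have "\<dots> = cvec (M *v x) $ i"
    using i by (simp add: cvec_def matrix_vector_mult_def)
  finally show "(cmat M *\<^sub>v cvec x) $ i = cvec (M *v x) $ i" .
qed

lemma eig_transfer:
  assumes "eigenvalue (cmat (M::real^'n::finite^'n)) \<mu>"
  shows "is_eigenvalue M \<mu>"
proof -
  from assms obtain v where v: "v \<in> carrier_vec CARD('n)" "v \<noteq> 0\<^sub>v CARD('n)"
    "cmat M *\<^sub>v v = \<mu> \<cdot>\<^sub>v v"
    unfolding eigenvalue_def eigenvector_def by (auto simp: cmat_def)
  define w :: "complex^'n" where "w = (\<chi> k. v $ ix k)"
  from v(1,2) obtain i where i: "i < CARD('n)" "v $ i \<noteq> 0"
    by (metis carrier_vecD eq_vecI index_zero_vec(1) index_zero_vec(2))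
  have "w $ xi i \<noteq> 0" using i by (simp add: w_def)
  hence w0: "w \<noteq> 0" by auto
  have "map_matrix complex_of_real M *v w = \<mu> *s w"
  proof (subst Finite_Cartesian_Product.vec_eq_iff, rule allI)
    fix k :: 'n
    have "(cmat M *\<^sub>v v) $ ix k = (\<Sum>j<CARD('n). complex_of_real (M $ k $ xi j) * v $ j)"
      using ix_lt[of k] v(1) by (simp add: cmat_def scalar_prod_def atLeast0LessThan)
    also have "\<dots> = (\<Sum>j<CARD('n). complex_of_real (M $ k $ xi j) * w $ xi j)"
      by (rule sum.cong) (auto simp: w_def)
    also have "\<dots> = (\<Sum>l\<in>UNIV. complex_of_real (M $ k $ l) * w $ l)"
      by (rule sum_xi)
    finally have "(map_matrix complex_of_real M *v w) $ k = (cmat M *\<^sub>v v) $ ix k"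
      by (simp add: matrix_vector_mult_def)
    also have "\<dots> = \<mu> * v $ ix k" using v(1,3) ix_lt[of k] by simp
    finally show "(map_matrix complex_of_real M *v w) $ k = (\<mu> *s w) $ k"
      by (simp add: w_def)
  qed
  with w0 show ?thesis unfolding is_eigenvalue_def by blast
qed

lemma cvec_pow: "cvec (((*v) M ^^ k) x) = cmat (M::real^'n::finite^'n) ^\<^sub>m k *\<^sub>v cvec x"
proof (induction k arbitrary: x)
  case 0
  show ?case using cvec_carrier[of x] by simp
next
  case (Suc k)
  have "cvec (((*v) M ^^ Suc k) x) = cvec (((*v) M ^^ k) (M *v x))"
    by (simp only: funpow_Suc_right o_def)
  also have "\<dots> = cmat M ^\<^sub>m k *\<^sub>v (cmat M *\<^sub>v cvec x)"
    by (simp add: Suc cmat_mult)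
  also have "\<dots> = (cmat M ^\<^sub>m k * cmat M) *\<^sub>v cvec x"
    using cmat_carrier[of M] cvec_carrier[of x]
    by (simp add: assoc_mult_mat_vec[symmetric, of _ "CARD('n)" "CARD('n)" _ "CARD('n)"])
  finally show ?case by simp
qed

lemma orbit_bounded:
  fixes M :: "real^'n::finite^'n"
  assumes "\<forall>\<mu>. is_eigenvalue M \<mu> \<longrightarrow> cmod \<mu> < 1"
  shows "\<exists>B. \<forall>k. norm (((*v) M ^^ k) x) \<le> B"
proof -
  let ?A = "cmat M" and ?n = "CARD('n)"
  have n: "?n > 0" by simp
  from spectral_radius_mem_max(1)[OF cmat_carrier n, of M]
  obtain \<mu> where mu: "\<mu> \<in> spectrum ?A" "spectral_radius ?A = norm \<mu>" by auto
  from mu(1) have "eigenvalue ?A \<mu>" unfolding spectrum_def by simp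
  from eig_transfer[OF this] assms have "norm \<mu> < 1" by auto
  with mu(2) have "spectral_radius ?A < 1" by simp
  from spectral_radius_jnf_norm_bound_less_1_upper_triangular[OF cmat_carrier this]
  obtain c where c: "\<And>k. norm_bound (?A ^\<^sub>m k) c" by auto
  define sx where "sx = (\<Sum>l\<in>UNIV. \<bar>x $ l\<bar>)"
  have comp: "\<bar>((*v) M ^^ k) x $ i\<bar> \<le> c * sx" for k i
  proof -
    have Ak: "?A ^\<^sub>m k \<in> carrier_mat ?n ?n" using cmat_carrier[of M] by simp
    have "complex_of_real (((*v) M ^^ k) x $ i) = cvec (((*v) M ^^ k) x) $ ix i"
      using ix_lt[of i] by (simp add: cvec_def)
    also have "\<dots> = (\<Sum>j<?n. (?A ^\<^sub>m k) $$ (ix i, j) * complex_of_real (x $ xi j))"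
      unfolding cvec_pow using carrier_matD[OF Ak] ix_lt[of i]
      by (simp add: scalar_prod_def cvec_def atLeast0LessThan)
    finally have eq: "complex_of_real (((*v) M ^^ k) x $ i) = \<dots>" .
    have "\<bar>((*v) M ^^ k) x $ i\<bar> = norm (\<Sum>j<?n. (?A ^\<^sub>m k) $$ (ix i, j) * complex_of_real (x $ xi j))"
      by (subst eq[symmetric]) simp
    also have "\<dots> \<le> (\<Sum>j<?n. norm ((?A ^\<^sub>m k) $$ (ix i, j) * complex_of_real (x $ xi j)))"
      by (rule norm_sum)
    also have "\<dots> \<le> (\<Sum>j<?n. c * \<bar>x $ xi j\<bar>)"
    proof (rule sum_mono)
      fix j assume "j \<in> {..<?n}"
      hence "norm ((?A ^\<^sub>m k) $$ (ix i, j)) \<le> c"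
        using c[of k] Ak ix_lt[of i] unfolding norm_bound_def by auto
      thus "norm ((?A ^\<^sub>m k) $$ (ix i, j) * complex_of_real (x $ xi j)) \<le> c * \<bar>x $ xi j\<bar>"
        by (simp add: norm_mult mult_right_mono)
    qed
    also have "\<dots> = c * sx" unfolding sx_def sum_distrib_left[symmetric] by (subst sum_xi) simp
    finally show ?thesis .
  qed
  have "norm (((*v) M ^^ k) x) \<le> real ?n * (c * sx)" for k
  proof -
    have "norm (((*v) M ^^ k) x) \<le> (\<Sum>i\<in>UNIV. \<bar>((*v) M ^^ k) x $ i\<bar>)"
      by (rule norm_le_l1_cart)
    also have "\<dots> \<le> (\<Sum>i\<in>(UNIV::'n set). c * sx)" by (rule sum_mono) (rule comp)
    finally show ?thesis by simp
  qed
  thus ?thesis by blast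
qed



lemma dotT: "(x::real^'m) \<bullet> ((A::real^'n^'m) *v y) = (transpose A *v x) \<bullet> y"
  by (simp add: dot_lmul_matrix)

lemma pd_nonneg: "pd Q \<Longrightarrow> 0 \<le> x \<bullet> (Q *v x)"
  unfolding pd_def by (cases "x = 0") auto

lemma pd_lower:
  fixes Q :: "real^'n::finite^'n"
  assumes "pd Q"
  shows "\<exists>q>0. \<forall>y. q * (norm y)\<^sup>2 \<le> y \<bullet> (Q *v y)"
proof -
  have cont: "continuous_on (sphere 0 1) (\<lambda>y::real^'n. y \<bullet> (Q *v y))"
    by (intro continuous_intros bounded_linear.continuous_on[OF matrix_vector_mul_bounded_linear])
  have ne: "sphere (0::real^'n) 1 \<noteq> {}" by simp
  from continuous_attains_inf[OF compact_sphere ne cont]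
  obtain z where z: "z \<in> sphere 0 1" "\<And>y. y \<in> sphere 0 1 \<Longrightarrow> z \<bullet> (Q *v z) \<le> y \<bullet> (Q *v y)"
    by blast
  have z0: "z \<noteq> 0" using z(1) by auto
  hence qpos: "0 < z \<bullet> (Q *v z)" using assms unfolding pd_def by auto
  have "(z \<bullet> (Q *v z)) * (norm y)\<^sup>2 \<le> y \<bullet> (Q *v y)" for y
  proof (cases "y = 0")
    case True thus ?thesis by simp
  next
    case False
    let ?u = "(1 / norm y) *\<^sub>R y"
    have u: "?u \<in> sphere 0 1" using False by (simp add: norm_scaleR)
    have "y = norm y *\<^sub>R ?u" using False by simp
    hence "y \<bullet> (Q *v y) = (norm y *\<^sub>R ?u) \<bullet> (Q *v (norm y *\<^sub>R ?u))" by simp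
    also have "\<dots> = (norm y)\<^sup>2 * (?u \<bullet> (Q *v ?u))"
      by (simp only: matrix_vector_mult_scaleR inner_scaleR_left inner_scaleR_right power2_eq_square mult.assoc mult.left_commute)
    finally have "y \<bullet> (Q *v y) = (norm y)\<^sup>2 * (?u \<bullet> (Q *v ?u))" .
    moreover have "z \<bullet> (Q *v z) \<le> ?u \<bullet> (Q *v ?u)" by (rule z(2)[OF u])
    ultimately show ?thesis
      by (metis mult.commute mult_left_mono zero_le_power2)
  qed
  with qpos show ?thesis by blast
qed

lemma S_psd:
  fixes AK S Q :: "real^'n::finite^'n" and K :: "real^'n^'m::finite" and R :: "real^'m^'m"
  assumes lyap: "transpose AK ** S ** AK - S = - Q - transpose K ** R ** K"
    and Q: "pd Q" and R: "pd R" and stab: "\<forall>\<mu>. is_eigenvalue AK \<mu> \<longrightarrow> cmod \<mu> < 1"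
  shows "0 \<le> x \<bullet> (S *v x)"
proof (rule ccontr)
  assume neg: "\<not> 0 \<le> x \<bullet> (S *v x)"
  define f where "f y = y \<bullet> (S *v y)" for y
  define y where "y j = ((*v) AK ^^ j) x" for j
  define e where "e = - f x"
  have e: "e > 0" using neg by (simp add: e_def f_def)
  have ySuc: "y (Suc j) = AK *v y j" for j by (simp add: y_def)
  have lyap': "transpose AK ** S ** AK = S - Q - transpose K ** R ** K"
  proof -
    have "transpose AK ** S ** AK = (transpose AK ** S ** AK - S) + S" by simp
    also have "\<dots> = S - Q - transpose K ** R ** K" unfolding lyap by (simp add: algebra_simps)
    finally show ?thesis .
  qed
  have step: "f (AK *v z) = f z - z \<bullet> (Q *v z) - (K *v z) \<bullet> (R *v (K *v z))" for z
  proof -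
    have "z \<bullet> ((transpose AK ** S ** AK) *v z) = z \<bullet> (transpose AK *v (S *v (AK *v z)))"
      by (simp only: matrix_vector_mul_assoc matrix_mul_assoc)
    also have "\<dots> = (AK *v z) \<bullet> (S *v (AK *v z))" 
      using dotT[of z "transpose AK" "S *v (AK *v z)"] by (simp only: Finite_Cartesian_Product.transpose_transpose)
    finally have "f (AK *v z) = z \<bullet> ((transpose AK ** S ** AK) *v z)" by (simp add: f_def)
    also have "\<dots> = z \<bullet> (S *v z) - z \<bullet> (Q *v z) - z \<bullet> ((transpose K ** R ** K) *v z)"
      by (simp add: lyap' matrix_vector_mult_diff_rdistrib inner_diff_right)
    also have "z \<bullet> ((transpose K ** R ** K) *v z) = z \<bullet> (transpose K *v (R *v (K *v z)))"
      by (simp only: matrix_vector_mul_assoc matrix_mul_assoc)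
    also have "\<dots> = (K *v z) \<bullet> (R *v (K *v z))"
      using dotT[of z "transpose K" "R *v (K *v z)"] by (simp only: Finite_Cartesian_Product.transpose_transpose)
    finally show ?thesis by (simp add: f_def)
  qed
  obtain q where q: "q > 0" "\<And>z. q * (norm z)\<^sup>2 \<le> z \<bullet> (Q *v z)" using pd_lower[OF Q] by blast
  obtain L where L: "L > 0" "\<And>z. norm (S *v z) \<le> norm z * L"
    using bounded_linear.pos_bounded[OF matrix_vector_mul_bounded_linear[of S]] by blast
  have fabs: "\<bar>f z\<bar> \<le> L * (norm z)\<^sup>2" for z
  proof -
    have "\<bar>f z\<bar> \<le> norm z * norm (S *v z)" unfolding f_def by (rule Cauchy_Schwarz_ineq2)
    also have "\<dots> \<le> norm z * (norm z * L)" by (rule mult_left_mono[OF L(2)]) simp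
    finally show ?thesis by (simp add: power2_eq_square mult_ac)
  qed
  have dec: "f (y (Suc j)) \<le> f (y j) - q * (norm (y j))\<^sup>2" for j
    using step[of "y j"] q(2)[of "y j"] pd_nonneg[OF R, of "K *v y j"] by (simp add: ySuc)
  have le_e: "f (y j) \<le> - e" for j
  proof (induction j)
    case 0 thus ?case by (simp add: y_def e_def)
  next
    case (Suc j)
    have "0 \<le> q * (norm (y j))\<^sup>2" using q(1) by simp
    thus ?case using Suc dec[of j] by linarith
  qed
  have nlow: "e / L \<le> (norm (y j))\<^sup>2" for j
    using le_e[of j] fabs[of "y j"] L(1) by (simp add: pos_divide_le_eq mult.commute)
  have lin: "f (y j) \<le> - e - real j * (q * (e / L))" for j
  proof (induction j)
    case 0 thus ?case using le_e[of 0] by simp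
  next
    case (Suc j)
    have "q * (e / L) \<le> q * (norm (y j))\<^sup>2" using nlow[of j] q(1) by (intro mult_left_mono) auto
    moreover have "real (Suc j) * (q * (e / L)) = real j * (q * (e / L)) + q * (e / L)"
      by (simp add: algebra_simps add_divide_distrib)
    ultimately show ?case using Suc dec[of j] by linarith
  qed
  obtain B where B: "\<And>j. norm (y j) \<le> B"
    using orbit_bounded[OF stab, of x] unfolding y_def by blast
  have flow: "- (L * B\<^sup>2) \<le> f (y j)" for j
  proof -
    have "norm (y j) ^ 2 \<le> B ^ 2" using B[of j] by (intro power_mono) auto
    hence "L * (norm (y j))\<^sup>2 \<le> L * B\<^sup>2" using L(1) by (simp add: mult_left_mono)
    thus ?thesis using fabs[of "y j"] by linarith
  qed
  have pos: "q * (e / L) > 0" using q(1) e L(1) by simp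
  obtain j :: nat where j: "real j > (L * B\<^sup>2) / (q * (e / L))" using reals_Archimedean2 by blast
  have gen: "\<And>r a t::real. r > 0 \<Longrightarrow> a / r < t \<Longrightarrow> a < t * r"
    by (simp add: pos_divide_less_eq)
  have "real j * (q * (e / L)) > L * B\<^sup>2" by (rule gen[OF pos j])
  with lin[of j] flow[of j] e show False by linarith
qed



lemma mat_diff_rdistrib: "((A::real^'n::finite^'m::finite) - B) ** (C::real^'p::finite^'n) = A ** C - B ** C"
  by (simp add: matrix_matrix_mult_def Finite_Cartesian_Product.vec_eq_iff sum_subtractf left_diff_distrib)

lemma transpose_add': "transpose ((A::real^'n::finite^'m::finite) + B) = transpose A + transpose B"
  by (simp add: transpose_def Finite_Cartesian_Product.vec_eq_iff)

lemma quadT: "(x::real^'m::finite) \<bullet> (((A::real^'n::finite^'m) ** D ** transpose A) *v x)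
   = (transpose A *v x) \<bullet> (D *v (transpose A *v x))"
proof -
  have "x \<bullet> ((A ** D ** transpose A) *v x) = x \<bullet> (A *v (D *v (transpose A *v x)))"
    by (simp only: matrix_vector_mul_assoc matrix_mul_assoc)
  also have "\<dots> = (transpose A *v x) \<bullet> (D *v (transpose A *v x))"
    by (rule dotT)
  finally show ?thesis .
qed

lemma axis_quad: "axis i 1 \<bullet> ((M::real^'n::finite^'n) *v axis k 1) = M $ i $ k"
  by (simp add: inner_axis' matrix_vector_mult_basis column_def)

lemma quad2: "(axis i 1 + s *\<^sub>R axis k 1) \<bullet> ((M::real^'n::finite^'n) *v (axis i 1 + s *\<^sub>R axis k 1))
   = M $ i $ i + s * M $ i $ k + s * M $ k $ i + s * s * M $ k $ k"
  by (simp add: matrix_vector_right_distrib matrix_vector_mult_scaleR inner_add_left inner_add_right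
      axis_quad algebra_simps)

lemma cov_props:
  fixes AK W S0 Sb :: "real^'n::finite^'n"
  assumes W: "psd W" and S0: "psd S0" and le0: "loewner_le S0 Sb"
    and Sb: "Sb = AK ** Sb ** transpose AK + W"
  shows "transpose (covseq AK W S0 j) = covseq AK W S0 j"
    and "0 \<le> x \<bullet> (covseq AK W S0 j *v x)"
    and "x \<bullet> (covseq AK W S0 j *v x) \<le> x \<bullet> (Sb *v x)"
proof -
  show "transpose (covseq AK W S0 j) = covseq AK W S0 j"
  proof (induction j)
    case 0 thus ?case using S0 by (simp add: psd_def)
  next
    case (Suc j)
    have "transpose (covseq AK W S0 (Suc j))
        = transpose (transpose AK) ** transpose (covseq AK W S0 j) ** transpose AK + transpose W"
      by (simp add: transpose_add' matrix_transpose_mul matrix_mul_assoc)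
    also have "\<dots> = covseq AK W S0 (Suc j)"
      using Suc W by (simp add: psd_def)
    finally show ?case .
  qed
  show "0 \<le> x \<bullet> (covseq AK W S0 j *v x)"
  proof (induction j arbitrary: x)
    case 0 thus ?case using S0 by (simp add: psd_def)
  next
    case (Suc j)
    have "x \<bullet> (covseq AK W S0 (Suc j) *v x)
        = (transpose AK *v x) \<bullet> (covseq AK W S0 j *v (transpose AK *v x)) + x \<bullet> (W *v x)"
      by (simp only: covseq.simps matrix_vector_mult_add_rdistrib inner_add_right quadT)
    also have "\<dots> \<ge> 0" using Suc[of "transpose AK *v x"] W by (simp add: psd_def)
    finally show ?case by simp
  qed
  show "x \<bullet> (covseq AK W S0 j *v x) \<le> x \<bullet> (Sb *v x)"
  proof (induction j arbitrary: x)
    case 0 thus ?case using le0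
      by (simp add: loewner_le_def psd_def matrix_vector_mult_diff_rdistrib inner_diff_right)
  next
    case (Suc j)
    have "x \<bullet> (covseq AK W S0 (Suc j) *v x)
        = (transpose AK *v x) \<bullet> (covseq AK W S0 j *v (transpose AK *v x)) + x \<bullet> (W *v x)"
      by (simp only: covseq.simps matrix_vector_mult_add_rdistrib inner_add_right quadT)
    also have "\<dots> \<le> (transpose AK *v x) \<bullet> (Sb *v (transpose AK *v x)) + x \<bullet> (W *v x)"
      using Suc[of "transpose AK *v x"] by simp
    also have "\<dots> = x \<bullet> ((AK ** Sb ** transpose AK + W) *v x)"
      by (simp only: matrix_vector_mult_add_rdistrib inner_add_right quadT)
    also have "\<dots> = x \<bullet> (Sb *v x)"
      by (rule arg_cong[where f="\<lambda>M. x \<bullet> (M *v x)"], rule Sb[symmetric])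
    finally show ?case .
  qed
qed

lemma trace_bound:
  fixes C :: "nat \<Rightarrow> real^'n::finite^'n" and P Sb :: "real^'n^'n"
  assumes sym: "\<And>j. transpose (C j) = C j"
    and pos: "\<And>j x. 0 \<le> x \<bullet> (C j *v x)"
    and le: "\<And>j x. x \<bullet> (C j *v x) \<le> x \<bullet> (Sb *v x)"
  shows "\<exists>T. \<forall>j. \<bar>trace (P ** C j)\<bar> \<le> T"
proof -
  define T0 where "T0 = (\<Sum>i\<in>UNIV. \<bar>Sb $ i $ i\<bar>)"
  have diag: "C j $ i $ i \<le> T0" for j i
  proof -
    have "C j $ i $ i \<le> Sb $ i $ i" using le[where j=j and x="axis i 1"] by (simp add: axis_quad)
    also have "\<dots> \<le> \<bar>Sb $ i $ i\<bar>" by simp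
    also have "\<dots> \<le> T0" unfolding T0_def by (rule member_le_sum) auto
    finally show ?thesis .
  qed
  have ent: "\<bar>C j $ a $ b\<bar> \<le> T0" for j a b
  proof -
    have s: "C j $ b $ a = C j $ a $ b"
      using arg_cong[OF sym[of j], of "\<lambda>M. M $ a $ b"] by (simp add: transpose_def)
    have p1: "0 \<le> C j $ a $ a + C j $ a $ b + C j $ b $ a + C j $ b $ b"
      using pos[where j=j and x="axis a 1 + 1 *\<^sub>R axis b 1"] unfolding quad2 by simp
    have p2: "0 \<le> C j $ a $ a - C j $ a $ b - C j $ b $ a + C j $ b $ b"
      using pos[where j=j and x="axis a 1 + (-1) *\<^sub>R axis b 1"] unfolding quad2 by simp
    show ?thesis using p1 p2 s diag[of j a] diag[of j b] by linarith
  qed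
  define T where "T = (\<Sum>i\<in>UNIV. \<Sum>k\<in>UNIV. \<bar>P $ i $ k\<bar> * T0)"
  have "\<bar>trace (P ** C j)\<bar> \<le> T" for j
  proof -
    have "\<bar>trace (P ** C j)\<bar> = \<bar>\<Sum>i\<in>UNIV. \<Sum>k\<in>UNIV. P $ i $ k * C j $ k $ i\<bar>"
      by (simp add: trace_def matrix_matrix_mult_def)
    also have "\<dots> \<le> (\<Sum>i\<in>UNIV. \<bar>\<Sum>k\<in>UNIV. P $ i $ k * C j $ k $ i\<bar>)" by (rule sum_abs)
    also have "\<dots> \<le> (\<Sum>i\<in>UNIV. \<Sum>k\<in>UNIV. \<bar>P $ i $ k * C j $ k $ i\<bar>)"
      by (intro sum_mono sum_abs)
    also have "\<dots> \<le> T" unfolding T_def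
      by (intro sum_mono) (simp add: abs_mult mult_left_mono ent)
    finally show ?thesis .
  qed
  thus ?thesis by blast
qed

lemma lyap_quad:
  fixes AK S Q :: "real^'n::finite^'n" and K :: "real^'n^'m::finite" and R :: "real^'m^'m"
  assumes lyap: "transpose AK ** S ** AK - S = - Q - transpose K ** R ** K"
  shows "(AK *v z) \<bullet> (S *v (AK *v z)) = z \<bullet> (S *v z) - z \<bullet> (Q *v z) - (K *v z) \<bullet> (R *v (K *v z))"
proof -
  have lyap': "transpose AK ** S ** AK = S - Q - transpose K ** R ** K"
  proof -
    have "transpose AK ** S ** AK = (transpose AK ** S ** AK - S) + S" by simp
    also have "\<dots> = S - Q - transpose K ** R ** K" unfolding lyap by (simp add: algebra_simps)
    finally show ?thesis .
  qed
  have "z \<bullet> ((transpose AK ** S ** AK) *v z) = z \<bullet> (transpose AK *v (S *v (AK *v z)))"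
    by (simp only: matrix_vector_mul_assoc matrix_mul_assoc)
  also have "\<dots> = (AK *v z) \<bullet> (S *v (AK *v z))"
    using dotT[of z "transpose AK" "S *v (AK *v z)"] by (simp only: Finite_Cartesian_Product.transpose_transpose)
  finally have e1: "(AK *v z) \<bullet> (S *v (AK *v z)) = z \<bullet> ((transpose AK ** S ** AK) *v z)" by simp
  have "z \<bullet> ((transpose K ** R ** K) *v z) = z \<bullet> (transpose K *v (R *v (K *v z)))"
    by (simp only: matrix_vector_mul_assoc matrix_mul_assoc)
  also have "\<dots> = (K *v z) \<bullet> (R *v (K *v z))"
    using dotT[of z "transpose K" "R *v (K *v z)"] by (simp only: Finite_Cartesian_Product.transpose_transpose)
  finally have e2: "z \<bullet> ((transpose K ** R ** K) *v z) = (K *v z) \<bullet> (R *v (K *v z))" .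
  show ?thesis unfolding e1 lyap' e2[symmetric]
    by (simp add: matrix_vector_mult_diff_rdistrib inner_diff_right)
qed

lemma trace_step:
  fixes AK S Q C W :: "real^'n::finite^'n" and K :: "real^'n^'m::finite" and R :: "real^'m^'m"
  assumes lyap: "transpose AK ** S ** AK - S = - Q - transpose K ** R ** K"
  shows "trace (S ** (AK ** C ** transpose AK + W))
     = trace (S ** C) - trace ((Q + transpose K ** R ** K) ** C) + trace (S ** W)"
proof -
  have lyap': "transpose AK ** S ** AK = S - (Q + transpose K ** R ** K)"
  proof -
    have "transpose AK ** S ** AK = (transpose AK ** S ** AK - S) + S" by simp
    also have "\<dots> = S - (Q + transpose K ** R ** K)" unfolding lyap by (simp add: algebra_simps)
    finally show ?thesis .
  qed
  have "trace (S ** (AK ** C ** transpose AK)) = trace ((S ** AK ** C) ** transpose AK)"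
    by (simp only: matrix_mul_assoc)
  also have "\<dots> = trace (transpose AK ** (S ** AK ** C))" by (rule trace_mul_sym)
  also have "\<dots> = trace ((transpose AK ** S ** AK) ** C)" by (simp only: matrix_mul_assoc)
  also have "\<dots> = trace (S ** C) - trace ((Q + transpose K ** R ** K) ** C)"
    unfolding lyap' mat_diff_rdistrib trace_sub ..
  finally show ?thesis by (simp add: matrix_add_ldistrib trace_add)
qed



theorem mainTheorem4:
  fixes A :: "real^'n^'n" and B :: "real^'m^'n" and K :: "real^'n^'m"
    and W Q S Sbar S0 :: "real^'n^'n" and R :: "real^'m^'m"
    and N :: nat and a x0 :: "real^'n" and c :: "real^'m" and b d px pu :: real
    and xb :: "nat \<Rightarrow> real^'n" and us :: "nat \<Rightarrow> nat \<Rightarrow> real^'m"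
  defines "AK \<equiv> A + B ** K"
  defines "Sg \<equiv> covseq (A + B ** K) W S0"
  defines "Xf \<equiv> Xset a b px Sbar"
  assumes W_psd: "psd W" and Q_pd: "pd Q" and R_pd: "pd R" and N_ge: "N \<ge> 1"
    and S_lyap: "transpose AK ** S ** AK - S = - Q - transpose K ** R ** K"
    and Sbar_psd: "psd Sbar" and Sbar_eq: "Sbar = AK ** Sbar ** transpose AK + W"
    and S0_psd: "psd S0" and S0_le: "loewner_le S0 Sbar"
    and b_pos: "b > 0" and d_pos: "d > 0"
    and px: "0 < px" "px < 1" and pu: "0 < pu" "pu < 1"
    and hyp_a: "\<forall>x\<in>Xf. \<forall>k. K *v x \<in> Uset K c d pu (Sg (k + N))"
    and hyp_b: "\<forall>\<mu>. is_eigenvalue AK \<mu> \<longrightarrow> cmod \<mu> < 1"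
    and hyp_c: "\<forall>x\<in>Xf. AK *v x \<in> Xf"
    and feas0: "\<exists>u. feasibleP A B (Xset a b px) (Uset K c d pu) Xf N Sg 0 x0 u"
    and xb0: "xb 0 = x0"
    and opt: "\<forall>k. optimalP A B Q R K S (Xset a b px) (Uset K c d pu) Xf N Sg k (xb k) (us k)"
    and xb_step: "\<forall>k. xb (Suc k) = A *v xb k + B *v us k 0"
  shows "limsup (\<lambda>M. ereal ((1 / real M) * (\<Sum>k<M.
            xb k \<bullet> (Q *v xb k) + us k 0 \<bullet> (R *v us k 0)
            + trace ((Q + transpose K ** R ** K) ** Sg k))))
         \<le> ereal (trace (S ** W))"
proof -
  let ?Xs = "Xset a b px" and ?Us = "Uset K c d pu"
  define MM where "MM = Q + transpose K ** R ** K"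
  define V where "V k = costJ A B Q R K S N Sg k (xb k) (us k)" for k
  define lk where "lk k = xb k \<bullet> (Q *v xb k) + us k 0 \<bullet> (R *v us k 0) + trace (MM ** Sg k)" for k
  define t where "t = trace (S ** W)"
  have Sbar_eq': "Sbar = (A + B ** K) ** Sbar ** transpose (A + B ** K) + W"
    using Sbar_eq unfolding AK_def .
  note cp = cov_props[OF W_psd S0_psd S0_le Sbar_eq']
  have Sg_sym: "\<And>j. transpose (Sg j) = Sg j" unfolding Sg_def by (rule cp(1))
  have Sg_pos: "\<And>j x. 0 \<le> x \<bullet> (Sg j *v x)" unfolding Sg_def by (rule cp(2))
  have Sg_le: "\<And>j x. x \<bullet> (Sg j *v x) \<le> x \<bullet> (Sbar *v x)" unfolding Sg_def by (rule cp(3))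
  have Sg_Suc: "Sg (Suc j) = AK ** Sg j ** transpose AK + W" for j
    unfolding Sg_def AK_def by simp
  have Xf_sub: "Xf \<subseteq> ?Xs (Sg j)" for j
  proof
    fix x assume "x \<in> Xf"
    then obtain y lam where yl: "0 \<le> y" "0 \<le> lam" "lam \<le> b"
      "y\<^sup>2 + a \<bullet> (Sbar *v a) \<le> px * (b - lam)\<^sup>2" "\<bar>a \<bullet> x\<bar> \<le> y + lam"
      unfolding Xf_def Xset_def by blast
    have "y\<^sup>2 + a \<bullet> (Sg j *v a) \<le> px * (b - lam)\<^sup>2"
      using yl(4) Sg_le[where j=j and x=a] by linarith
    with yl show "x \<in> ?Xs (Sg j)" unfolding Xset_def by blast
  qed
  have S_nonneg: "0 \<le> x \<bullet> (S *v x)" for x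
    by (rule S_psd[OF S_lyap Q_pd R_pd hyp_b])
  have trS: "trace (S ** Sg (Suc j)) = trace (S ** Sg j) - trace (MM ** Sg j) + t" for j
    unfolding Sg_Suc MM_def t_def by (rule trace_step[OF S_lyap])
  obtain N1 where N1: "N = Suc N1" using N_ge by (cases N) auto
  have dec: "V (Suc k) \<le> V k - lk k + t" for k
  proof -
    define X where "X l = xpred A B (xb k) (us k) l" for l
    define u' where "u' l = (if l < N1 then us k (Suc l) else K *v X N)" for l
    define X' where "X' l = xpred A B (xb (Suc k)) u' l" for l
    have feas: "feasibleP A B ?Xs ?Us Xf N Sg k (xb k) (us k)"
      using opt unfolding optimalP_def by blast
    hence fX: "\<And>l. l < N \<Longrightarrow> X l \<in> ?Xs (Sg (k + l)) \<and> us k l \<in> ?Us (Sg (k + l))"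
      and fXN: "X N \<in> Xf"
      unfolding feasibleP_def X_def by auto
    have X'X: "l \<le> N1 \<Longrightarrow> X' l = X (Suc l)" for l
    proof (induction l)
      case 0 thus ?case using xb_step by (simp add: X'_def X_def)
    next
      case (Suc l)
      hence "X' l = X (Suc l)" by simp
      moreover have "u' l = us k (Suc l)" using Suc.prems by (simp add: u'_def)
      ultimately show ?case by (simp add: X'_def X_def)
    qed
    have X'N: "X' N = AK *v X N"
    proof -
      have "X' N = A *v X' N1 + B *v u' N1" by (simp add: X'_def N1)
      also have "\<dots> = A *v X N + B *v (K *v X N)" using X'X[of N1] by (simp add: u'_def N1)
      also have "\<dots> = AK *v X N"
        by (simp add: AK_def matrix_vector_mult_add_rdistrib matrix_vector_mul_assoc)
      finally show ?thesis .
    qed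
    have feas': "feasibleP A B ?Xs ?Us Xf N Sg (Suc k) (xb (Suc k)) u'"
      unfolding feasibleP_def
    proof (rule conjI, intro allI impI)
      fix l assume l: "l < N"
      show "xpred A B (xb (Suc k)) u' l \<in> ?Xs (Sg (Suc k + l)) \<and> u' l \<in> ?Us (Sg (Suc k + l))"
      proof (cases "l < N1")
        case True
        hence "Suc l < N" using N1 by simp
        from fX[OF this] True show ?thesis
          using X'X[of l] by (simp add: X'_def u'_def)
      next
        case False
        hence lN: "l = N1" using l N1 by simp
        have "X' l = X N" using X'X[of N1] lN N1 by simp
        moreover have "Suc k + l = k + N" using lN N1 by simp
        moreover have "u' l = K *v X N" using lN by (simp add: u'_def)
        ultimately show ?thesis
          using fXN Xf_sub[of "k + N"] hyp_a by (auto simp: X'_def)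
      qed
    next
      show "xpred A B (xb (Suc k)) u' N \<in> Xf"
        using X'N hyp_c fXN by (simp add: X'_def[symmetric])
    qed
    have Vle: "V (Suc k) \<le> costJ A B Q R K S N Sg (Suc k) (xb (Suc k)) u'"
      using opt feas' unfolding optimalP_def V_def by blast
    define st where "st l = X l \<bullet> (Q *v X l) + us k l \<bullet> (R *v us k l)" for l
    define st' where "st' l = X' l \<bullet> (Q *v X' l) + u' l \<bullet> (R *v u' l)" for l
    define g where "g j = trace (MM ** Sg j)" for j
    have Vk: "V k = (\<Sum>l<N. st l) + X N \<bullet> (S *v X N) + (\<Sum>l<N. g (k + l)) + trace (S ** Sg (k + N))"
      unfolding V_def costJ_def st_def g_def X_def MM_def ..
    have Vc: "costJ A B Q R K S N Sg (Suc k) (xb (Suc k)) u'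
        = (\<Sum>l<N. st' l) + X' N \<bullet> (S *v X' N) + (\<Sum>l<N. g (Suc k + l)) + trace (S ** Sg (Suc k + N))"
      unfolding costJ_def st'_def g_def X'_def MM_def ..
    have s1: "(\<Sum>l<N. st l) = st 0 + (\<Sum>l<N1. st (Suc l))"
      unfolding N1 sum.lessThan_Suc_shift ..
    have s2: "(\<Sum>l<N. st' l) = (\<Sum>l<N1. st (Suc l)) + (X N \<bullet> (Q *v X N) + (K *v X N) \<bullet> (R *v (K *v X N)))"
    proof -
      have "(\<Sum>l<N. st' l) = (\<Sum>l<N1. st' l) + st' N1" unfolding N1 by simp
      moreover have "(\<Sum>l<N1. st' l) = (\<Sum>l<N1. st (Suc l))"
        by (rule sum.cong) (auto simp: st'_def st_def X'X u'_def)
      moreover have "st' N1 = X N \<bullet> (Q *v X N) + (K *v X N) \<bullet> (R *v (K *v X N))"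
        using X'X[of N1] by (simp add: st'_def u'_def N1)
      ultimately show ?thesis by simp
    qed
    have s3: "X' N \<bullet> (S *v X' N) = X N \<bullet> (S *v X N) - X N \<bullet> (Q *v X N) - (K *v X N) \<bullet> (R *v (K *v X N))"
      unfolding X'N by (rule lyap_quad[OF S_lyap])
    have s4: "(\<Sum>l<N. g (k + l)) = g k + (\<Sum>l<N1. g (k + Suc l))"
      unfolding N1 sum.lessThan_Suc_shift by simp
    have s5: "(\<Sum>l<N. g (Suc k + l)) = (\<Sum>l<N1. g (k + Suc l)) + g (k + N)"
      unfolding N1 by simp
    have s6: "trace (S ** Sg (Suc k + N)) = trace (S ** Sg (k + N)) - g (k + N) + t"
      using trS[of "k + N"] by (simp add: g_def)
    have s7: "lk k = st 0 + g k"
      by (simp add: lk_def st_def g_def X_def)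
    show ?thesis using Vle unfolding Vk Vc s1 s2 s3 s4 s5 s6 s7 by linarith
  qed
  obtain T1 where T1: "\<And>j. \<bar>trace (MM ** Sg j)\<bar> \<le> T1"
    using trace_bound[where C=Sg and P=MM, OF Sg_sym Sg_pos Sg_le] by blast
  obtain T2 where T2: "\<And>j. \<bar>trace (S ** Sg j)\<bar> \<le> T2"
    using trace_bound[where C=Sg and P=S, OF Sg_sym Sg_pos Sg_le] by blast
  define Cb where "Cb = real N * T1 + T2"
  have Vlow: "- Cb \<le> V k" for k
  proof -
    let ?X = "xpred A B (xb k) (us k)"
    have a1: "0 \<le> (\<Sum>l<N. ?X l \<bullet> (Q *v ?X l) + us k l \<bullet> (R *v us k l))"
      by (intro sum_nonneg add_nonneg_nonneg pd_nonneg Q_pd R_pd)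
    have a2: "0 \<le> ?X N \<bullet> (S *v ?X N)" by (rule S_nonneg)
    have a3: "- (real N * T1) \<le> (\<Sum>l<N. trace (MM ** Sg (k + l)))"
    proof -
      have "(\<Sum>l<N. - T1) \<le> (\<Sum>l<N. trace (MM ** Sg (k + l)))"
        by (rule sum_mono) (use T1 in \<open>smt (verit)\<close>)
      thus ?thesis by simp
    qed
    have a4: "- T2 \<le> trace (S ** Sg (k + N))" using T2[of "k + N"] by linarith
    have "V k = (\<Sum>l<N. ?X l \<bullet> (Q *v ?X l) + us k l \<bullet> (R *v us k l)) + ?X N \<bullet> (S *v ?X N)
        + (\<Sum>l<N. trace (MM ** Sg (k + l))) + trace (S ** Sg (k + N))"
      unfolding V_def costJ_def MM_def ..
    thus ?thesis using a1 a2 a3 a4 unfolding Cb_def by linarith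
  qed
  have sumb: "(\<Sum>k<M. lk k) \<le> V 0 - V M + real M * t" for M
  proof (induction M)
    case 0 thus ?case by simp
  next
    case (Suc M) thus ?case using dec[of M] by (simp add: algebra_simps)
  qed
  define D where "D = V 0 + Cb"
  have bnd: "(1 / real M) * (\<Sum>k<M. lk k) \<le> t + D / real M" if M: "M \<ge> 1" for M
  proof -
    have "(\<Sum>k<M. lk k) \<le> D + real M * t" using sumb[of M] Vlow[of M] unfolding D_def by linarith
    hence "(1 / real M) * (\<Sum>k<M. lk k) \<le> (1 / real M) * (D + real M * t)"
      using M by (intro mult_left_mono) auto
    also have "\<dots> = t + D / real M" using M by (simp add: field_simps)
    finally show ?thesis .
  qed
  have ev: "eventually (\<lambda>M. ereal ((1 / real M) * (\<Sum>k<M. lk k)) \<le> ereal (t + D / real M)) sequentially"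
    using bnd by (intro eventually_sequentiallyI[of 1]) simp
  have lim: "(\<lambda>M. ereal (t + D / real M)) \<longlonglongrightarrow> ereal t"
    unfolding lim_ereal using tendsto_add[OF tendsto_const lim_const_over_n[of D]] by simp
  have "limsup (\<lambda>M. ereal ((1 / real M) * (\<Sum>k<M. lk k))) \<le> limsup (\<lambda>M. ereal (t + D / real M))"
    by (rule Limsup_mono[OF ev])
  also have "\<dots> = ereal t" by (rule lim_imp_Limsup[OF trivial_limit_sequentially lim])
  finally show ?thesis unfolding lk_def MM_def t_def .
qed


end
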